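(* Let $q=2^r>2$ and $n\ge 1$. Then $$\beta_q^{(n)}(x_1,\dots,x_n)=\sum_{1\le i_1,\dots,i_n\le 2^r-2}x_1^{i_1}x_2^{i_2}\cdots x_n^{i_n}\;+\;x_1+\cdots+x_n$$ is a local permutation polynomial in $\mathbb{F}_q[x_1,\dots,x_n]$ of degree $n(2^r-2)$.
   Context: $\mathbb{F}_q$ is the finite field with $q$ elements. A polynomial $f\in\mathbb{F}_q[x_1,\dots,x_n]$ is a local permutation polynomial (LPP) if, for each $i\in\{1,\dots,n\}$ and each choice of $(a_1,\dots,a_{i-1},a_{i+1},\dots,a_n)\in\mathbb{F}_q^{n-1}$, the univariate polynomial $f(a_1,\dots,a_{i-1},x_i,a_{i+1},\dots,a_n)$ induces a bijection of $\mathbb{F}_q$. Degree means total degree. *)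

theory Defs
  imports Main "HOL-Library.Poly_Mapping" "HOL-Library.FuncSet"
begin

text \<open>Multivariate polynomials over a commutative ring 'a in variables x_0, x_1, ...
  (indexed by nat): a monomial is a finitely supported exponent vector
  nat =>0 nat, a polynomial is a finitely supported map from monomials to
  coefficients (the standard representation of MPoly).\<close>

type_synonym 'a mpoly = "(nat \<Rightarrow>\<^sub>0 nat) \<Rightarrow>\<^sub>0 'a"

definition mpoly_eval :: "'a::comm_ring_1 mpoly \<Rightarrow> (nat \<Rightarrow> 'a) \<Rightarrow> 'a" where
  "mpoly_eval p a =
     (\<Sum>m\<in>Poly_Mapping.keys p. Poly_Mapping.lookup p m * (\<Prod>i\<in>Poly_Mapping.keys m. a i ^ Poly_Mapping.lookup m i))"

definition mon_degree :: "(nat \<Rightarrow>\<^sub>0 nat) \<Rightarrow> nat" where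
  "mon_degree m = (\<Sum>i\<in>Poly_Mapping.keys m. Poly_Mapping.lookup m i)"

definition total_degree :: "'a::zero mpoly \<Rightarrow> nat" where
  "total_degree p = Max (insert 0 (mon_degree ` Poly_Mapping.keys p))"

definition in_vars :: "nat \<Rightarrow> 'a::zero mpoly \<Rightarrow> bool" where
  "in_vars n p \<longleftrightarrow> (\<forall>m\<in>Poly_Mapping.keys p. Poly_Mapping.keys m \<subseteq> {..<n})"

definition is_LPP :: "nat \<Rightarrow> 'a::{finite,field} mpoly \<Rightarrow> bool" where
  "is_LPP n f \<longleftrightarrow> in_vars n f \<and>
     (\<forall>i<n. \<forall>a::nat \<Rightarrow> 'a. bij (\<lambda>x. mpoly_eval f (a(i := x))))"

text \<open>The monomial x_0^{e 0} ... x_{n-1}^{e (n-1)}, and the polynomial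
  beta_q^{(n)} = sum over 1 <= i_1..i_n <= q-2 of x^i  +  x_1 + ... + x_n
  (variables shifted to indices 0..n-1).\<close>

definition expvec :: "nat \<Rightarrow> (nat \<Rightarrow> nat) \<Rightarrow> (nat \<Rightarrow>\<^sub>0 nat)" where
  "expvec n e = (\<Sum>j<n. Poly_Mapping.single j (e j))"

definition beta :: "nat \<Rightarrow> nat \<Rightarrow> 'a::comm_ring_1 mpoly" where
  "beta q n =
     (\<Sum>e\<in>{..<n} \<rightarrow>\<^sub>E {1..q-2}. Poly_Mapping.single (expvec n e) 1)
     + (\<Sum>i<n. Poly_Mapping.single (Poly_Mapping.single i 1) 1)"

end

theory Submission
  imports Defs
begin


definition mon_eval :: "(nat \<Rightarrow>\<^sub>0 nat) \<Rightarrow> (nat \<Rightarrow> 'a::comm_ring_1) \<Rightarrow> 'a" where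
  "mon_eval m a = (\<Prod>i\<in>Poly_Mapping.keys m. a i ^ Poly_Mapping.lookup m i)"

lemma mon_eval_sup:
  assumes "finite K" "Poly_Mapping.keys m \<subseteq> K"
  shows "mon_eval m a = (\<Prod>i\<in>K. a i ^ Poly_Mapping.lookup m i)"
  unfolding mon_eval_def
  by (rule prod.mono_neutral_left) (use assms in \<open>auto simp: in_keys_iff\<close>)

lemma mpoly_eval_sup:
  assumes "finite K" "Poly_Mapping.keys p \<subseteq> K"
  shows "mpoly_eval p a = (\<Sum>m\<in>K. Poly_Mapping.lookup p m * mon_eval m a)"
  unfolding mpoly_eval_def mon_eval_def[symmetric]
  by (rule sum.mono_neutral_left) (use assms in \<open>auto simp: in_keys_iff\<close>)

lemma mpoly_eval_add: "mpoly_eval (p + q) a = mpoly_eval p a + mpoly_eval q a"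
proof -
  let ?K = "Poly_Mapping.keys p \<union> Poly_Mapping.keys q"
  have "mpoly_eval (p + q) a = (\<Sum>m\<in>?K. Poly_Mapping.lookup (p+q) m * mon_eval m a)"
    by (rule mpoly_eval_sup) (auto dest: keys_add[THEN subsetD])
  also have "\<dots> = (\<Sum>m\<in>?K. Poly_Mapping.lookup p m * mon_eval m a) + (\<Sum>m\<in>?K. Poly_Mapping.lookup q m * mon_eval m a)"
    by (simp add: lookup_add distrib_right sum.distrib)
  also have "\<dots> = mpoly_eval p a + mpoly_eval q a"
    by (subst (1 2) mpoly_eval_sup[of ?K]) auto
  finally show ?thesis .
qed

lemma mpoly_eval_zero: "mpoly_eval 0 a = 0"
  by (simp add: mpoly_eval_def)

lemma mpoly_eval_sum: "mpoly_eval (\<Sum>x\<in>X. f x) a = (\<Sum>x\<in>X. mpoly_eval (f x) a)"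
  by (induction X rule: infinite_finite_induct) (auto simp: mpoly_eval_zero mpoly_eval_add)

lemma mpoly_eval_single: "mpoly_eval (Poly_Mapping.single m c) a = c * mon_eval m a"
  by (subst mpoly_eval_sup[of "{m}"]) auto

lemma lookup_expvec: "Poly_Mapping.lookup (expvec n e) j = (if j < n then e j else 0)"
  unfolding expvec_def lookup_sum by (auto simp: lookup_single when_def)

lemma keys_expvec: "Poly_Mapping.keys (expvec n e) \<subseteq> {..<n}"
  by (auto simp: in_keys_iff lookup_expvec split: if_splits)

lemma mon_eval_expvec: "mon_eval (expvec n e) a = (\<Prod>j<n. a j ^ e j)"
  by (subst mon_eval_sup[of "{..<n}"]) (auto simp: keys_expvec lookup_expvec)

definition S :: "nat \<Rightarrow> 'a::comm_ring_1 \<Rightarrow> 'a" where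
  "S q x = (\<Sum>i\<in>{1..q-2}. x ^ i)"

lemma eval_beta: "mpoly_eval (beta q n) a = (\<Prod>j<n. S q (a j)) + (\<Sum>j<n. a j)"
proof -
  have "(\<Prod>j<n. S q (a j)) = (\<Sum>e\<in>{..<n} \<rightarrow>\<^sub>E {1..q-2}. \<Prod>j<n. a j ^ e j)"
    unfolding S_def by (rule prod_sum_PiE) auto
  moreover have "mon_eval (Poly_Mapping.single i 1) a = a i" for i
    by (subst mon_eval_sup[of "{i}"]) auto
  ultimately show ?thesis
    unfolding beta_def mpoly_eval_add mpoly_eval_sum mpoly_eval_single mon_eval_expvec
    by simp
qed



lemma card_of_nat_zero: "of_nat (card (UNIV :: 'a::{finite,comm_ring_1} set)) = (0::'a)"
proof -
  have "(\<Sum>x\<in>(UNIV::'a set). x) = (\<Sum>x\<in>UNIV. x + 1)"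
    by (rule sum.reindex_bij_witness[of _ "\<lambda>x. x + 1" "\<lambda>x. x - 1"]) auto
  then show ?thesis by (simp add: sum.distrib)
qed

lemma fermat_fin:
  fixes x :: "'a::{finite,field}"
  assumes "x \<noteq> 0"
  shows "x ^ (card (UNIV::'a set) - 1) = 1"
proof -
  let ?U = "UNIV - {0::'a}"
  have c: "card ?U = card (UNIV::'a set) - 1" by (simp add: card_Diff_singleton)
  have "(\<Prod>y\<in>?U. y) = (\<Prod>y\<in>?U. x * y)"
    by (rule prod.reindex_bij_witness[of _ "\<lambda>y. x * y" "\<lambda>y. y / x"]) (use assms in auto)
  also have "\<dots> = x ^ card ?U * (\<Prod>y\<in>?U. y)" by (simp add: prod.distrib)
  finally have "x ^ card ?U * (\<Prod>y\<in>?U. y) = 1 * (\<Prod>y\<in>?U. y)" by simp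
  moreover have "(\<Prod>y\<in>?U. y) \<noteq> 0" by simp
  ultimately show ?thesis using c by (metis mult_right_cancel)
qed

lemma two_zero:
  assumes "card (UNIV :: 'a::{finite,field} set) = 2 ^ r"
  shows "(2::'a) = 0"
proof -
  have "(2::'a) ^ r = 0" using card_of_nat_zero[where 'a='a] assms by simp
  then show ?thesis by simp
qed

lemma S_val:
  fixes x :: "'a::{finite,field}"
  assumes "card (UNIV :: 'a set) = 2 ^ r" "2 ^ r > (2::nat)"
  shows "S (2^r) x = (if x = 0 \<or> x = 1 then 0 else 1)"
proof -
  have two: "(2::'a) = 0" using two_zero assms(1) .
  have q: "2^r - 2 + 1 = (2::nat)^r - 1" using assms(2) by simp
  have split: "(\<Sum>i<2^r - 1. x ^ i) = 1 + S (2^r) x"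
  proof -
    have "{..<(2::nat)^r - 1} = insert 0 {1..2^r-2}" using assms(2) by auto
    then show ?thesis unfolding S_def by simp
  qed
  show ?thesis
  proof (cases "x = 0")
    case True then show ?thesis unfolding S_def by (auto intro!: sum.neutral)
  next
    case x0: False
    show ?thesis
    proof (cases "x = 1")
      case True
      have "S (2^r) x = of_nat (2^r - 2)" using True by (simp add: S_def)
      also have "\<dots> = of_nat (2^r) - 2" using assms(2) by (simp add: of_nat_diff)
      also have "\<dots> = 0" using two card_of_nat_zero[where 'a='a] assms(1) by simp
      finally show ?thesis using True by simp
    next
      case False
      have "x^(2^r - 1) - 1 = 0" using fermat_fin[OF x0] assms(1) by simp
      then have "(x - 1) * (\<Sum>i<2^r - 1. x ^ i) = 0" by (simp add: power_diff_1_eq)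
      then have "(\<Sum>i<2^r - 1. x ^ i) = 0" using False by simp
      then have "S (2^r) x = -1" using split by (simp add: eq_neg_iff_add_eq_0 add.commute)
      moreover have "(-1::'a) = 1" using two by (simp add: minus_equation_iff)
      ultimately show ?thesis using False x0 by simp
    qed
  qed
qed



lemma mon_degree_expvec: "mon_degree (expvec n e) = (\<Sum>j<n. e j)"
proof -
  have "mon_degree (expvec n e) = (\<Sum>j<n. Poly_Mapping.lookup (expvec n e) j)"
    unfolding mon_degree_def
    by (rule sum.mono_neutral_left) (auto simp: keys_expvec in_keys_iff)
  then show ?thesis by (simp add: lookup_expvec)
qed

lemma mon_degree_single: "mon_degree (Poly_Mapping.single i 1) = 1"
  unfolding mon_degree_def by simp

lemma keys_beta: "Poly_Mapping.keys (beta q n :: 'a::comm_ring_1 mpoly) \<subseteq>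
   (expvec n ` ({..<n} \<rightarrow>\<^sub>E {1..q-2})) \<union> ((\<lambda>i. Poly_Mapping.single i 1) ` {..<n})"
proof -
  have "Poly_Mapping.keys (beta q n :: 'a mpoly) \<subseteq>
     Poly_Mapping.keys (\<Sum>e\<in>{..<n} \<rightarrow>\<^sub>E {1..q-2}. Poly_Mapping.single (expvec n e) (1::'a))
     \<union> Poly_Mapping.keys (\<Sum>i<n. Poly_Mapping.single (Poly_Mapping.single i 1) (1::'a))"
    unfolding beta_def by (rule keys_add)
  moreover have "Poly_Mapping.keys (\<Sum>e\<in>{..<n} \<rightarrow>\<^sub>E {1..q-2}. Poly_Mapping.single (expvec n e) (1::'a)) \<subseteq> expvec n ` ({..<n} \<rightarrow>\<^sub>E {1..q-2})"
    by (rule order_trans[OF keys_sum]) auto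
  moreover have "Poly_Mapping.keys (\<Sum>i<n. Poly_Mapping.single (Poly_Mapping.single i 1) (1::'a)) \<subseteq> (\<lambda>i. Poly_Mapping.single i 1) ` {..<n}"
    by (rule order_trans[OF keys_sum]) auto
  ultimately show ?thesis by blast
qed



lemma bij_aux:
  fixes D C :: "'a::{finite,field}"
  assumes "card (UNIV :: 'a set) = 2 ^ r" "2 ^ r > (2::nat)" "C = 0 \<or> C = 1"
  shows "bij (\<lambda>x. S (2^r) x * C + (x + D))"
proof -
  have two: "(2::'a) = 0" using two_zero assms(1) .
  have m1: "\<And>y::'a. y + 1 = 0 \<longleftrightarrow> y = 1"
    using two by (metis add_diff_cancel_right' diff_add_cancel one_add_one)
  have inj: "inj (\<lambda>x. S (2^r) x * C + (x + D))"
  proof (rule injI)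
    fix x y assume h: "S (2^r) x * C + (x + D) = S (2^r) y * C + (y + D)"
    show "x = y"
    proof (cases "C = 0")
      case True then show ?thesis using h by simp
    next
      case False
      then have C: "C = 1" using assms(3) by blast
      from h have h': "S (2^r) x + x = S (2^r) y + y" using C by (simp add: add.assoc)
      have g: "S (2^r) z + z = (if z = 0 \<or> z = 1 then z else z + 1)" for z :: 'a
        using S_val[OF assms(1,2), of z] by (simp add: add.commute)
      have nz: "\<And>z. \<not> (z = 0 \<or> z = 1) \<Longrightarrow> \<not> (z + 1 = 0 \<or> z + 1 = (1::'a))"
        using m1 by simp
      show ?thesis
      proof (cases "x = 0 \<or> x = 1"; cases "y = 0 \<or> y = 1")
        assume "x = 0 \<or> x = 1" "y = 0 \<or> y = 1" then show ?thesis using h' g by simp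
      next
        assume a: "x = 0 \<or> x = 1" "\<not> (y = 0 \<or> y = 1)"
        then have "x = y + 1" using h' g by simp
        then show ?thesis using a nz[of y] by blast
      next
        assume a: "\<not> (x = 0 \<or> x = 1)" "y = 0 \<or> y = 1"
        then have "x + 1 = y" using h' g by simp
        then show ?thesis using a nz[of x] by blast
      next
        assume a: "\<not> (x = 0 \<or> x = 1)" "\<not> (y = 0 \<or> y = 1)"
        then have "x + 1 = y + 1" using h' g by simp
        then show ?thesis by simp
      qed
    qed
  qed
  show ?thesis using inj finite_UNIV_inj_surj[OF finite_UNIV inj] by (simp add: bij_def)
qed


lemma degree_beta:
  fixes q n :: nat
  assumes q2: "q - 2 \<ge> 2" and "n \<ge> 1"
  shows "total_degree (beta q n :: 'a::comm_ring_1 mpoly) = n * (q - 2)"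
proof -
  let ?b = "beta q n :: 'a mpoly"
  have KB: "Poly_Mapping.keys ?b \<subseteq> (expvec n ` ({..<n} \<rightarrow>\<^sub>E {1..q-2})) \<union> ((\<lambda>i. Poly_Mapping.single i 1) ` {..<n})"
    by (rule keys_beta)
  have ub: "mon_degree m \<le> n * (q - 2)" if "m \<in> Poly_Mapping.keys ?b" for m
  proof -
    from subsetD[OF KB that] show ?thesis
    proof (elim UnE imageE)
      fix e assume m: "m = expvec n e" and e: "e \<in> {..<n} \<rightarrow>\<^sub>E {1..q-2}"
      have "(\<Sum>j<n. e j) \<le> (\<Sum>j<n. q - 2)"
      proof (rule sum_mono)
        fix j assume "j \<in> {..<n}"
        then have "e j \<in> {1..q-2}" by (rule PiE_mem[OF e])
        then show "e j \<le> q - 2" by simp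
      qed
      also have "\<dots> = n * (q - 2)" by simp
      finally show ?thesis unfolding m mon_degree_expvec .
    next
      fix i assume s: "m = Poly_Mapping.single i 1" and "i \<in> {..<n}"
      have "1 * 1 \<le> n * (q - 2)" using q2 assms(2) by (intro mult_le_mono) auto
      then show ?thesis unfolding s mon_degree_single by (simp only: mult_1)
    qed
  qed
  define e0 where "e0 = (\<lambda>j. if j < n then q - 2 else undefined)"
  define M where "M = expvec n e0"
  have e0P: "e0 \<in> {..<n} \<rightarrow>\<^sub>E {1..q-2}" using q2 by (auto simp: e0_def split: if_splits)
  have lk: "Poly_Mapping.lookup M j = (if j < n then q - 2 else 0)" for j
    by (simp add: M_def lookup_expvec e0_def)
  have l1: "Poly_Mapping.lookup (\<Sum>e\<in>{..<n} \<rightarrow>\<^sub>E {1..q-2}. Poly_Mapping.single (expvec n e) (1::'a)) M = 1"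
  proof -
    have "Poly_Mapping.lookup (\<Sum>e\<in>{..<n} \<rightarrow>\<^sub>E {1..q-2}. Poly_Mapping.single (expvec n e) (1::'a)) M
       = (\<Sum>e\<in>{..<n} \<rightarrow>\<^sub>E {1..q-2}. if e = e0 then 1 else 0)"
      unfolding lookup_sum
    proof (rule sum.cong[OF refl])
      fix e assume e: "e \<in> {..<n} \<rightarrow>\<^sub>E {1..q-2}"
      have "expvec n e = M \<longleftrightarrow> e = e0"
      proof
        assume h: "expvec n e = M"
        show "e = e0"
        proof
          fix j show "e j = e0 j"
          proof (cases "j < n")
            case True
            then show ?thesis using arg_cong[OF h, of "\<lambda>m. Poly_Mapping.lookup m j"] lk[of j]
              by (simp add: lookup_expvec e0_def)
          next
            case False then show ?thesis using e by (auto simp: e0_def)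
          qed
        qed
      qed (simp add: M_def)
      then show "Poly_Mapping.lookup (Poly_Mapping.single (expvec n e) (1::'a)) M = (if e = e0 then 1 else 0)"
        by (simp add: lookup_single when_def)
    qed
    also have "\<dots> = 1" using e0P by (subst sum.delta) (auto intro: finite_PiE)
    finally show ?thesis .
  qed
  have l2: "Poly_Mapping.lookup (\<Sum>i<n. Poly_Mapping.single (Poly_Mapping.single i 1) (1::'a)) M = 0"
    unfolding lookup_sum
  proof (rule sum.neutral, rule ballI)
    fix i assume "i \<in> {..<n}"
    have "Poly_Mapping.single i 1 \<noteq> M"
    proof
      assume "Poly_Mapping.single i 1 = M"
      then have "Poly_Mapping.lookup (Poly_Mapping.single i 1) 0 = Poly_Mapping.lookup M 0" by simp
      then show False using lk[of 0] assms(2) q2 by (auto simp: lookup_single when_def split: if_splits)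
    qed
    then show "Poly_Mapping.lookup (Poly_Mapping.single (Poly_Mapping.single i 1) (1::'a)) M = 0"
      by (simp add: lookup_single when_def)
  qed
  have MK: "M \<in> Poly_Mapping.keys ?b"
    unfolding in_keys_iff beta_def lookup_add l1 l2 by simp
  have dM: "mon_degree M = n * (q - 2)"
    by (simp add: M_def mon_degree_expvec e0_def)
  show "total_degree ?b = n * (q - 2)"
    unfolding total_degree_def
  proof (rule Max_eqI)
    show "finite (insert 0 (mon_degree ` Poly_Mapping.keys ?b))" by simp
  next
    fix y assume "y \<in> insert 0 (mon_degree ` Poly_Mapping.keys ?b)"
    then show "y \<le> n * (q - 2)" using ub by auto
  next
    show "n * (q - 2) \<in> insert 0 (mon_degree ` Poly_Mapping.keys ?b)"
      using MK dM by (metis image_eqI insertI2)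
  qed
qed

lemma q2_lemma: assumes "2 < (2::nat)^r" shows "(2::nat) \<le> 2^r - 2"
proof (cases r)
  case 0 then show ?thesis using assms by simp
next
  case (Suc k)
  then show ?thesis using assms
  proof (cases k)
    case 0 then show ?thesis using assms Suc by simp
  next
    case (Suc l)
    have "(2::nat)^r = 4 * 2^l" using \<open>r = Suc k\<close> Suc by simp
    moreover have "(1::nat) \<le> 2^l" by simp
    ultimately show ?thesis by linarith
  qed
qed

theorem mainTheorem9:
  fixes r n :: nat
  assumes "card (UNIV :: 'a::{finite,field} set) = 2 ^ r" and "2 ^ r > (2::nat)" and "n \<ge> 1"
  shows "is_LPP n (beta (2 ^ r) n :: 'a mpoly)
         \<and> total_degree (beta (2 ^ r) n :: 'a mpoly) = n * (2 ^ r - 2)"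
proof
  let ?q = "2^r :: nat"
  let ?b = "beta ?q n :: 'a mpoly"
  have KB: "Poly_Mapping.keys ?b \<subseteq> (expvec n ` ({..<n} \<rightarrow>\<^sub>E {1..?q-2})) \<union> ((\<lambda>i. Poly_Mapping.single i 1) ` {..<n})"
    by (rule keys_beta)
  show "is_LPP n ?b"
    unfolding is_LPP_def
  proof (intro conjI allI impI)
    show "in_vars n ?b"
      unfolding in_vars_def
    proof
      fix m assume "m \<in> Poly_Mapping.keys ?b"
      from subsetD[OF KB this] consider (e) e where "m = expvec n e" | (s) i where "i < n" "m = Poly_Mapping.single i 1"
        by (elim UnE imageE) blast+
      then show "Poly_Mapping.keys m \<subseteq> {..<n}"
      proof cases
        case e then show ?thesis using keys_expvec by simp
      next
        case s then show ?thesis by simp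
      qed
    qed
  next
    fix i :: nat and a :: "nat \<Rightarrow> 'a" assume i: "i < n"
    define C where "C = (\<Prod>j\<in>{..<n} - {i}. S ?q (a j))"
    define D where "D = (\<Sum>j\<in>{..<n} - {i}. a j)"
    have ev: "mpoly_eval ?b (a(i := x)) = S ?q x * C + (x + D)" for x :: 'a
    proof -
      have "(\<Prod>j<n. S ?q ((a(i := x)) j)) = S ?q x * C"
        unfolding C_def using i by (subst prod.remove[of _ i]) (auto intro!: prod.cong)
      moreover have "(\<Sum>j<n. (a(i := x)) j) = x + D"
        unfolding D_def using i by (subst sum.remove[of _ i]) (auto intro!: sum.cong)
      ultimately show ?thesis by (simp add: eval_beta)
    qed
    have C01: "C = 0 \<or> C = 1"
    proof (cases "\<exists>j\<in>{..<n} - {i}. S ?q (a j) = 0")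
      case True then show ?thesis unfolding C_def by (simp add: prod_zero_iff)
    next
      case False
      have "S ?q (a j) = 1" if "j \<in> {..<n} - {i}" for j
      proof -
        have "S ?q (a j) \<noteq> 0" using False that by blast
        then show ?thesis using S_val[OF assms(1,2), of "a j"] by (simp split: if_splits)
      qed
      then show ?thesis unfolding C_def by simp
    qed
    show "bij (\<lambda>x. mpoly_eval ?b (a(i := x)))"
      unfolding ev using bij_aux[OF assms(1,2) C01] .
  qed
next
  have "2 \<le> (2::nat)^r - 2" using assms(2) by (rule q2_lemma)
  then show "total_degree (beta (2 ^ r) n :: 'a mpoly) = n * (2 ^ r - 2)"
    by (rule degree_beta[OF _ assms(3)])
qed

end
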